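(* Let $n,m\ge 2$, $R>0$, and let $k_1,h_1$ be functions on $[0,\pi R/2]$ with $k_1''\le 0$ and $h_1''\le 0$, such that $g_1=ds^2+k_1^2(s)\,ds_{m-1}^2+h_1^2(s)\,ds_{n-1}^2$ is a smooth Riemannian metric of positive Ricci curvature on $\mathbb{S}^{n+m-1}$. For $\lambda\in[1,2]$ set $k_\lambda(s)=(2-\lambda)k_1(s)+(\lambda-1)R\cos(s/R)$, $h_\lambda(s)=(2-\lambda)h_1(s)+(\lambda-1)R\sin(s/R)$, and $g_\lambda=ds^2+k_\lambda^2(s)\,ds_{m-1}^2+h_\lambda^2(s)\,ds_{n-1}^2$ (so $g_2$ is the round metric of radius $R$). Then $g_\lambda$ has positive Ricci curvature for all $\lambda\in[1,2]$.
   Context: $ds_k^2$ denotes the unit round metric on $\mathbb{S}^k$; the metrics are doubly warped products on $(0,\pi R/2)\times\mathbb{S}^{m-1}\times\mathbb{S}^{n-1}$ extending smoothly to $\mathbb{S}^{n+m-1}$. *)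

theory Defs
  imports "HOL-Analysis.Analysis"
begin

text \<open>D is a family of successive (one-sided at the endpoints) derivatives of f on [0,L]:
  f is C-infinity on the closed interval [0,L].\<close>
definition smooth_cl :: "real \<Rightarrow> (nat \<Rightarrow> real \<Rightarrow> real) \<Rightarrow> (real \<Rightarrow> real) \<Rightarrow> bool" where
  "smooth_cl L D f \<longleftrightarrow> (\<forall>x\<in>{0..L}. D 0 x = f x) \<and>
     (\<forall>j. \<forall>x\<in>{0..L}. (D j has_real_derivative D (Suc j) x) (at x within {0..L}))"

text \<open>ds^2 + k^2 ds_{m-1}^2 + h^2 ds_{n-1}^2 on (0,L) x S^{m-1} x S^{n-1} extends to a smooth
  Riemannian metric on the sphere S^{n+m-1} (standard smoothness conditions at the
  singular orbits s = 0, where the S^{n-1} factor collapses, and s = L, where the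
  S^{m-1} factor collapses).\<close>
definition dwp_metric :: "real \<Rightarrow> (real \<Rightarrow> real) \<Rightarrow> (real \<Rightarrow> real) \<Rightarrow> bool" where
  "dwp_metric L k h \<longleftrightarrow> L > 0 \<and> (\<exists>Dk Dh. smooth_cl L Dk k \<and> smooth_cl L Dh h \<and>
     (\<forall>s\<in>{0..<L}. k s > 0) \<and> (\<forall>s\<in>{0<..L}. h s > 0) \<and>
     Dh 1 0 = 1 \<and> (\<forall>j. Dh (2*j) 0 = 0 \<and> Dk (2*j+1) 0 = 0) \<and>
     Dk 1 L = -1 \<and> (\<forall>j. Dk (2*j) L = 0 \<and> Dh (2*j+1) L = 0))"

text \<open>Ricci curvatures of the doubly warped product in the orthonormal eigenframe
  (radial direction, unit direction tangent to S^{m-1}, unit direction tangent to S^{n-1}).\<close>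
definition ric_rad :: "nat \<Rightarrow> nat \<Rightarrow> (real \<Rightarrow> real) \<Rightarrow> (real \<Rightarrow> real) \<Rightarrow> real \<Rightarrow> real" where
  "ric_rad m n k h s = - (real m - 1) * deriv (deriv k) s / k s
                       - (real n - 1) * deriv (deriv h) s / h s"

definition ric_k :: "nat \<Rightarrow> nat \<Rightarrow> (real \<Rightarrow> real) \<Rightarrow> (real \<Rightarrow> real) \<Rightarrow> real \<Rightarrow> real" where
  "ric_k m n k h s = - deriv (deriv k) s / k s
      + (real m - 2) * (1 - (deriv k s)\<^sup>2) / (k s)\<^sup>2
      - (real n - 1) * deriv k s * deriv h s / (k s * h s)"

definition ric_h :: "nat \<Rightarrow> nat \<Rightarrow> (real \<Rightarrow> real) \<Rightarrow> (real \<Rightarrow> real) \<Rightarrow> real \<Rightarrow> real" where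
  "ric_h m n k h s = - deriv (deriv h) s / h s
      + (real n - 2) * (1 - (deriv h s)\<^sup>2) / (h s)\<^sup>2
      - (real m - 1) * deriv k s * deriv h s / (k s * h s)"

text \<open>Positive Ricci curvature of the (smooth, compact) metric: since the Ricci tensor is
  continuous on the compact sphere and the regular part (0,L) x S^{m-1} x S^{n-1} is dense,
  positivity is equivalent to a uniform positive lower bound of the eigenvalues on (0,L).\<close>
definition dwp_pos_ricci :: "real \<Rightarrow> nat \<Rightarrow> nat \<Rightarrow> (real \<Rightarrow> real) \<Rightarrow> (real \<Rightarrow> real) \<Rightarrow> bool" where
  "dwp_pos_ricci L m n k h \<longleftrightarrow> dwp_metric L k h \<and> (\<exists>\<epsilon>>0. \<forall>s\<in>{0<..<L}.
      ric_rad m n k h s \<ge> \<epsilon> \<and> ric_k m n k h s \<ge> \<epsilon> \<and> ric_h m n k h s \<ge> \<epsilon>)"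

end

theory Submission
  imports Defs
begin
definition DC :: "real \<Rightarrow> nat \<Rightarrow> real \<Rightarrow> real" where
  "DC R j x = R * (1/R)^j * cos (x/R + real j * pi/2)"
definition DS :: "real \<Rightarrow> nat \<Rightarrow> real \<Rightarrow> real" where
  "DS R j x = R * (1/R)^j * sin (x/R + real j * pi/2)"

lemma DC_deriv: "(DC R j has_real_derivative DC R (Suc j) x) (at x)"
proof -
  have e: "x/R + real (Suc j)*pi/2 = (x/R + real j*pi/2) + pi/2" by (simp add: distrib_right add_divide_distrib)
  have "((\<lambda>x. R*(1/R)^j*cos(x/R + real j*pi/2)) has_real_derivative
      R*(1/R)^j*(-sin(x/R + real j*pi/2)*(1/R))) (at x)"
    by (auto intro!: derivative_eq_intros)
  moreover have "R*(1/R)^j*(-sin(x/R + real j*pi/2)*(1/R)) = DC R (Suc j) x"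
    unfolding DC_def e by (simp add: cos_add)
  ultimately show ?thesis unfolding DC_def by simp
qed

lemma DS_deriv: "(DS R j has_real_derivative DS R (Suc j) x) (at x)"
proof -
  have e: "x/R + real (Suc j)*pi/2 = (x/R + real j*pi/2) + pi/2" by (simp add: distrib_right add_divide_distrib)
  have "((\<lambda>x. R*(1/R)^j * sin(x/R + real j*pi/2)) has_real_derivative
      R*(1/R)^j*(cos(x/R + real j*pi/2)*(1/R))) (at x)"
    by (auto intro!: derivative_eq_intros)
  moreover have "R*(1/R)^j*(cos(x/R + real j*pi/2)*(1/R)) = DS R (Suc j) x"
    unfolding DS_def e by (simp add: sin_add)
  ultimately show ?thesis unfolding DS_def by simp
qed

lemma smooth_comb:
  assumes "smooth_cl L D f" "\<And>j x. (E j has_real_derivative E (Suc j) x) (at x)"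
    "\<forall>x\<in>{0..L}. g x = a*f x + b*E 0 x"
  shows "smooth_cl L (\<lambda>j x. a*D j x + b*E j x) g"
  unfolding smooth_cl_def
proof (intro conjI ballI allI)
  fix x assume "x \<in> {0..L}"
  then show "a*D 0 x + b*E 0 x = g x" using assms(1,3) unfolding smooth_cl_def by auto
next
  fix j x assume x: "x \<in> {0..L}"
  have "(D j has_real_derivative D (Suc j) x) (at x within {0..L})" using assms(1) x unfolding smooth_cl_def by auto
  moreover have "(E j has_real_derivative E (Suc j) x) (at x within {0..L})"
    using assms(2) by (rule has_field_derivative_at_within)
  ultimately show "((\<lambda>x. a*D j x + b*E j x) has_real_derivative a*D (Suc j) x + b*E (Suc j) x) (at x within {0..L})"
    by (intro DERIV_add DERIV_cmult)
qed

lemma smooth_at: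
  assumes "smooth_cl L D f" "s \<in> {0<..<L}"
  shows "(D j has_real_derivative D (Suc j) s) (at s)"
proof -
  have "(D j has_real_derivative D (Suc j) s) (at s within {0..L})" using assms unfolding smooth_cl_def by auto
  then have "(D j has_real_derivative D (Suc j) s) (at s within {0<..<L})"
    by (rule has_field_derivative_subset) auto
  moreover have "at s within {0<..<L} = at s" using assms(2) by (intro at_within_open) auto
  ultimately show ?thesis by metis
qed

lemma smooth_deriv:
  assumes "smooth_cl L D f" "s \<in> {0<..<L}"
  shows "deriv f s = D 1 s \<and> deriv (deriv f) s = D 2 s"
proof -
  have f1: "(f has_real_derivative D 1 x) (at x)" if "x \<in> {0<..<L}" for x
  proof (rule has_field_derivative_transform_within_open[where S="{0<..<L}"])
    show "(D 0 has_real_derivative D 1 x) (at x)" using smooth_at[OF assms(1) that, of 0] by simp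
    show "D 0 y = f y" if "y \<in> {0<..<L}" for y using assms(1) that unfolding smooth_cl_def by auto
  qed (use that in auto)
  have d1: "deriv f x = D 1 x" if "x \<in> {0<..<L}" for x using f1[OF that] by (rule DERIV_imp_deriv)
  have "(deriv f has_real_derivative D 2 s) (at s)"
  proof (rule has_field_derivative_transform_within_open[where S="{0<..<L}"])
    show "(D 1 has_real_derivative D 2 s) (at s)" using smooth_at[OF assms, of 1] by (simp add: numeral_2_eq_2)
    show "D 1 y = deriv f y" if "y \<in> {0<..<L}" for y using d1[OF that] by simp
  qed (use assms in auto)
  then have "deriv (deriv f) s = D 2 s" by (rule DERIV_imp_deriv)
  with d1[OF assms(2)] show ?thesis by (rule conjI)
qed

lemma smooth_mvt:
  assumes "smooth_cl L D f" "0 \<le> x" "x < y" "y \<le> L"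
  shows "\<exists>z\<in>{x<..<y}. D j y - D j x = D (Suc j) z * (y - x)"
proof -
  have "\<exists>z\<in>{x<..<y}. D j y - D j x = (\<lambda>h. D (Suc j) z * h) (y - x)"
  proof (rule mvt_simple)
    fix t assume t: "x \<le> t" "t \<le> y"
    have "(D j has_real_derivative D (Suc j) t) (at t within {0..L})" using assms t unfolding smooth_cl_def by auto
    then have "(D j has_real_derivative D (Suc j) t) (at t within {x..y})"
      by (rule has_field_derivative_subset) (use assms in auto)
    then show "(D j has_derivative (\<lambda>h. D (Suc j) t * h)) (at t within {x..y})"
      by (simp add: has_field_derivative_def)
  qed (use assms in auto)
  then show ?thesis by simp
qed

lemma smooth_anti:
  assumes "smooth_cl L D f" "\<forall>s\<in>{0<..<L}. D 2 s \<le> 0" "0 \<le> x" "x \<le> y" "y \<le> L"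
  shows "D 1 y \<le> D 1 x"
proof (cases "x = y")
  case False
  then have "x < y" using assms by auto
  from smooth_mvt[OF assms(1,3) this assms(5), of 1] obtain z where
    z: "z \<in> {x<..<y}" "D 1 y - D 1 x = D 2 z * (y - x)" by (auto simp: numeral_2_eq_2)
  have "D 2 z \<le> 0" using assms z by auto
  then have "D 2 z * (y - x) \<le> 0" using \<open>x<y\<close> by (simp add: mult_nonpos_nonneg)
  then show ?thesis using z by simp
qed simp

lemma jordan:
  assumes "0 \<le> x" "x \<le> pi/2"
  shows "2/pi*x \<le> sin x"
proof -
  have "concave_on {0..pi/2} sin"
  proof (rule f''_le0_imp_concave)
    show "\<And>x. x \<in> {0..pi/2} \<Longrightarrow> DERIV sin x :> cos x" by (rule DERIV_sin)
    show "\<And>x. x \<in> {0..pi/2} \<Longrightarrow> DERIV cos x :> - sin x" by (rule DERIV_cos)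
    show "\<And>x. x \<in> {0..pi/2} \<Longrightarrow> - sin x \<le> 0" by (auto intro!: sin_ge_zero)
  qed auto
  then have "sin x \<ge> (sin (pi/2) - sin 0) / (pi/2 - 0) * (x - 0) + sin 0"
    using assms by (intro concave_onD_Icc') auto
  then show ?thesis by simp
qed



lemma pos_comb:
  fixes a b p q :: real
  assumes "0\<le>a" "0\<le>b" "a+b=1" "0<p" "0<q"
  shows "0 < a*p+b*q"
proof -
  have "a*min p q \<le> a*p" "b*min p q \<le> b*q" using assms by (auto intro: mult_left_mono)
  moreover have "a*min p q + b*min p q = min p q" using assms(3) by (metis distrib_right mult_1)
  ultimately show ?thesis using assms by (smt (verit))
qed

lemma core_T:
  fixes a b p p' p'' q q' r r' t t' C P R e mu nu :: real
  assumes ab: "0\<le>a" "0\<le>b" "a+b=1" and pos: "0<p" "0<q" "0<r" "0<t"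
    and bd: "a*p+b*q \<le> C*p" "a*p+b*q \<le> P*q" "a*r+b*t \<le> C*r" "1\<le>C" "0<P" "0<R"
    and d2: "p''\<le>0" and d1: "p'^2 \<le> 1" "q'^2 \<le> 1"
    and sg: "p'*r' \<le> 0" "q'*r' \<le> 0" "p'*t' \<le> 0" "q'*t' \<le> 0"
    and mn: "0\<le>mu" "0\<le>nu" and e: "0<e"
    and hyp: "e \<le> - p''/p + mu*(1-p'^2)/p^2 - nu*p'*r'/(p*r)"
  shows "max (a^2*e/C^2) (b/(P*R^2)) \<le> - (a*p''+b*(-q/R^2))/(a*p+b*q)
      + mu*(1-(a*p'+b*q')^2)/(a*p+b*q)^2 - nu*(a*p'+b*q')*(a*r'+b*t')/((a*p+b*q)*(a*r+b*t))"
proof -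
  define K where "K = a*p+b*q"
  define H where "H = a*r+b*t"
  have Kpos: "K > 0" unfolding K_def using ab pos by (intro pos_comb) auto
  have Hpos: "H > 0" unfolding H_def using ab pos by (intro pos_comb) auto
  have X1: "0 \<le> - p''/p" using d2 pos by (simp add: divide_nonpos_pos)
  have X2: "0 \<le> (1-p'^2)/p^2" using d1 by simp
  have X3: "0 \<le> -(p'*r')/(p*r)" using sg pos by (simp add: divide_nonpos_pos)
  define T1 where "T1 = - (a*p''+b*(-q/R^2))/K"
  define T2 where "T2 = (1-(a*p'+b*q')^2)/K^2"
  define T3 where "T3 = -((a*p'+b*q')*(a*r'+b*t'))/(K*H)"
  have n1: "a*(-p'') \<ge> 0" using ab d2 by (simp add: mult_nonneg_nonpos)
  have n2: "b*(q/R^2) \<ge> 0" using ab pos bd by simp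
  have T1a: "T1 \<ge> (a/C) * (-p''/p)"
  proof -
    have "(a/C) * (-p''/p) = a*(-p'')/(C*p)" by simp
    also have "\<dots> \<le> a*(-p'')/K"
      using n1 Kpos bd(1) unfolding K_def by (intro divide_left_mono) auto
    also have "\<dots> \<le> T1" unfolding T1_def using n2 Kpos
      by (simp add: divide_right_mono field_simps)
    finally show ?thesis .
  qed
  have T1b: "T1 \<ge> b/(P*R^2)"
  proof -
    have "b/(P*R^2) = b*(q/R^2)/(P*q)" using pos bd by (simp add: field_simps)
    also have "\<dots> \<le> b*(q/R^2)/K"
      using n2 Kpos bd(2) unfolding K_def by (intro divide_left_mono) auto
    also have "\<dots> \<le> T1" unfolding T1_def using n1 Kpos
      by (simp add: divide_right_mono field_simps)
    finally show ?thesis .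
  qed
  have sq: "(a*p'+b*q')^2 \<le> a*p'^2 + b*q'^2"
  proof -
    have "a*p'^2 + b*q'^2 - (a*p'+b*q')^2 = a*b*(p'-q')^2"
    proof -
      have bb: "b = 1 - a" using ab(3) by simp
      show ?thesis unfolding bb power2_eq_square by algebra
    qed
    moreover have "a*b*(p'-q')^2 \<ge> 0" using ab by simp
    ultimately show ?thesis by linarith
  qed
  have num2: "1-(a*p'+b*q')^2 \<ge> a*(1-p'^2)"
  proof -
    have "b*(1-q'^2) \<ge> 0" using ab d1 by simp
    moreover have "b*(1-q'^2) = b - b*q'^2" "a*(1-p'^2) = a - a*p'^2" by (simp_all add: algebra_simps)
    ultimately show ?thesis using sq ab(3) by linarith
  qed
  have K2: "K^2 \<le> (C*p)^2" using Kpos bd(1) unfolding K_def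
    by (intro power_mono) auto
  have T2a: "T2 \<ge> (a/C^2) * ((1-p'^2)/p^2)"
  proof -
    have "(a/C^2) * ((1-p'^2)/p^2) = a*(1-p'^2)/((C*p)^2)" by (simp add: power_mult_distrib)
    also have "\<dots> \<le> a*(1-p'^2)/K^2"
      using K2 Kpos ab d1 pos bd by (intro divide_left_mono) auto
    also have "\<dots> \<le> T2" unfolding T2_def using num2 Kpos
      by (simp add: divide_right_mono)
    finally show ?thesis .
  qed
  have T2b: "T2 \<ge> 0" using T2a X2 ab bd by (smt (verit) mult_nonneg_nonneg zero_le_divide_iff zero_le_power2)
  have num3: "-((a*p'+b*q')*(a*r'+b*t')) \<ge> a^2*(-(p'*r'))"
  proof -
    have e3: "-((a*p'+b*q')*(a*r'+b*t')) = a^2*(-(p'*r')) + a*b*(-(p'*t')) + a*b*(-(q'*r')) + b^2*(-(q'*t'))"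
      by (simp add: power2_eq_square algebra_simps)
    have "a*b*(-(p'*t')) \<ge> 0" "a*b*(-(q'*r')) \<ge> 0" "b^2*(-(q'*t')) \<ge> 0"
      using ab sg by (auto intro!: mult_nonneg_nonpos)
    then show ?thesis using e3 by linarith
  qed
  have KH: "K*H \<le> (C*p)*(C*r)" using Kpos Hpos bd unfolding K_def H_def
    by (intro mult_mono) auto
  have T3a: "T3 \<ge> (a^2/C^2) * (-(p'*r')/(p*r))"
  proof -
    have "(a^2/C^2) * (-(p'*r')/(p*r)) = a^2*(-(p'*r'))/((C*p)*(C*r))" by (simp add: power2_eq_square)
    also have "\<dots> \<le> a^2*(-(p'*r'))/(K*H)"
      using KH Kpos Hpos ab sg pos bd by (intro divide_left_mono) (auto intro!: mult_pos_pos mult_nonneg_nonpos)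
    also have "\<dots> \<le> T3" unfolding T3_def using num3 Kpos Hpos
      by (simp add: divide_right_mono)
    finally show ?thesis .
  qed
  have T3b: "T3 \<ge> 0" using T3a X3 by (smt (verit) mult_nonneg_nonneg zero_le_divide_iff zero_le_power2)
  have RHS: "- (a*p''+b*(-q/R^2))/(a*p+b*q)
      + mu*(1-(a*p'+b*q')^2)/(a*p+b*q)^2 - nu*(a*p'+b*q')*(a*r'+b*t')/((a*p+b*q)*(a*r+b*t))
      = T1 + mu*T2 + nu*T3"
  proof -
    have "nu*(a*p'+b*q')*(a*r'+b*t')/((a*p+b*q)*(a*r+b*t)) = - (nu*T3)"
      unfolding T3_def K_def H_def by simp
    moreover have "- (a*p''+b*(-q/R^2))/(a*p+b*q) = T1" unfolding T1_def K_def by simp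
    moreover have "mu*(1-(a*p'+b*q')^2)/(a*p+b*q)^2 = mu*T2" unfolding T2_def K_def by simp
    ultimately show ?thesis by linarith
  qed
  have aC: "a^2/C^2 \<le> a/C" and aC2: "a^2/C^2 \<le> a/C^2"
  proof -
    have "a^2 \<le> a" using ab by (simp add: power2_eq_square mult_left_le_one_le)
    moreover have "a/C^2 \<le> a/C" using ab bd by (intro divide_left_mono) (auto simp: power2_eq_square)
    moreover have c2: "a^2/C^2 \<le> a/C^2" using \<open>a^2 \<le> a\<close> bd by (intro divide_right_mono) auto
    ultimately show "a^2/C^2 \<le> a/C" "a^2/C^2 \<le> a/C^2" by linarith+
  qed
  have A: "a^2*e/C^2 \<le> T1 + mu*T2 + nu*T3"
  proof -
    have "a^2*e/C^2 \<le> (a^2/C^2) * (- p''/p + mu*((1-p'^2)/p^2) + nu*(-(p'*r')/(p*r)))"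
    proof -
      have "e \<le> - p''/p + mu*((1-p'^2)/p^2) + nu*(-(p'*r')/(p*r))" using hyp by simp
      then have "(a^2/C^2) * e \<le> (a^2/C^2) * (- p''/p + mu*((1-p'^2)/p^2) + nu*(-(p'*r')/(p*r)))"
        by (intro mult_left_mono) auto
      then show ?thesis by simp
    qed
    also have "\<dots> = (a^2/C^2)*(- p''/p) + mu*((a^2/C^2)*((1-p'^2)/p^2)) + nu*((a^2/C^2)*(-(p'*r')/(p*r)))"
      by (simp add: algebra_simps)
    also have "\<dots> \<le> T1 + mu*T2 + nu*T3"
    proof -
      have "(a^2/C^2)*(- p''/p) \<le> T1" using aC X1 T1a by (meson mult_right_mono order_trans)
      moreover have "(a^2/C^2)*((1-p'^2)/p^2) \<le> T2" using aC2 X2 T2a by (meson mult_right_mono order_trans)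
      moreover have "(a^2/C^2)*(-(p'*r')/(p*r)) \<le> T3" using T3a by simp
      ultimately show ?thesis using mn by (smt (verit) mult_left_mono)
    qed
    finally show ?thesis .
  qed
  have B: "b/(P*R^2) \<le> T1 + mu*T2 + nu*T3" using T1b T2b T3b mn by (smt (verit) mult_nonneg_nonneg)
  show ?thesis using A B RHS by simp
qed


lemma T1_bounds:
  fixes a b p p'' q C P R :: real
  assumes ab: "0\<le>a" "0\<le>b" "a+b=1" and pos: "0<p" "0<q"
    and bd: "a*p+b*q \<le> C*p" "a*p+b*q \<le> P*q" "1\<le>C" "0<P" "0<R" and d2: "p''\<le>0"
  shows "(a/C) * (-p''/p) \<le> - (a*p''+b*(-q/R^2))/(a*p+b*q)"
    "b/(P*R^2) \<le> - (a*p''+b*(-q/R^2))/(a*p+b*q)"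
    "0 \<le> - (a*p''+b*(-q/R^2))/(a*p+b*q)"
proof -
  define K where "K = a*p+b*q"
  have Kpos: "K > 0" unfolding K_def using ab pos by (intro pos_comb) auto
  have n1: "a*(-p'') \<ge> 0" using ab d2 by (simp add: mult_nonneg_nonpos)
  have n2: "b*(q/R^2) \<ge> 0" using ab pos bd by simp
  have eq: "- (a*p''+b*(-q/R^2))/(a*p+b*q) = (a*(-p'') + b*(q/R^2))/K" unfolding K_def by simp
  have "(a/C) * (-p''/p) = a*(-p'')/(C*p)" by simp
  also have "\<dots> \<le> a*(-p'')/K"
    using n1 Kpos bd(1) unfolding K_def by (intro divide_left_mono) auto
  also have "\<dots> \<le> (a*(-p'') + b*(q/R^2))/K" using n2 Kpos
    by (intro divide_right_mono) auto
  finally have A: "(a/C) * (-p''/p) \<le> (a*(-p'') + b*(q/R^2))/K" .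
  show "(a/C) * (-p''/p) \<le> - (a*p''+b*(-q/R^2))/(a*p+b*q)" using A eq by linarith
  have "b/(P*R^2) = b*(q/R^2)/(P*q)" using pos bd by (simp add: field_simps)
  also have "\<dots> \<le> b*(q/R^2)/K"
    using n2 Kpos bd(2) unfolding K_def by (intro divide_left_mono) auto
  also have "\<dots> \<le> (a*(-p'') + b*(q/R^2))/K" using n1 Kpos
    by (intro divide_right_mono) auto
  finally have B: "b/(P*R^2) \<le> (a*(-p'') + b*(q/R^2))/K" .
  show "b/(P*R^2) \<le> - (a*p''+b*(-q/R^2))/(a*p+b*q)" using B eq by linarith
  have "0 \<le> (a*(-p'') + b*(q/R^2))/K" using n1 n2 Kpos by simp
  then show "0 \<le> - (a*p''+b*(-q/R^2))/(a*p+b*q)" using eq by linarith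
qed

lemma neg_div: "- m * x / y = m * (- x / (y::real))"
  by (simp only: mult_minus_left mult_minus_right times_divide_eq_right)

lemma core_rad:
  fixes a b p p'' q r r'' t C P R e mu nu :: real
  assumes ab: "0\<le>a" "0\<le>b" "a+b=1" and pos: "0<p" "0<q" "0<r" "0<t"
    and bd: "a*p+b*q \<le> C*p" "a*p+b*q \<le> P*q" "a*r+b*t \<le> C*r" "a*r+b*t \<le> P*t"
       "1\<le>C" "0<P" "0<R"
    and d2: "p''\<le>0" "r''\<le>0" and mn: "1\<le>mu" "1\<le>nu" and e: "0<e"
    and hyp: "e \<le> - mu * p''/p - nu * r''/r"
  shows "max (a^2*e/C^2) (b/(P*R^2)) \<le> - mu * (a*p''+b*(-q/R^2))/(a*p+b*q)
      - nu * (a*r''+b*(-t/R^2))/(a*r+b*t)"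
proof -
  define T where "T = - (a*p''+b*(-q/R^2))/(a*p+b*q)"
  define U where "U = - (a*r''+b*(-t/R^2))/(a*r+b*t)"
  note A = T1_bounds[OF ab pos(1,2) bd(1,2,5,6,7) d2(1), folded T_def]
  note B = T1_bounds[OF ab pos(3,4) bd(3,4,5,6,7) d2(2), folded U_def]
  have X: "0 \<le> -p''/p" "0 \<le> -r''/r" using d2 pos by (auto simp: divide_nonpos_pos)
  have eq: "- mu * (a*p''+b*(-q/R^2))/(a*p+b*q) - nu * (a*r''+b*(-t/R^2))/(a*r+b*t) = mu*T + nu*U"
  proof -
    have "- mu * (a*p''+b*(-q/R^2))/(a*p+b*q) = mu*T" unfolding T_def by (rule neg_div)
    moreover have "- nu * (a*r''+b*(-t/R^2))/(a*r+b*t) = nu*U" unfolding U_def by (rule neg_div)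
    moreover have "- (nu * (a*r''+b*(-t/R^2))/(a*r+b*t)) = - nu * (a*r''+b*(-t/R^2))/(a*r+b*t)" by simp
    ultimately show ?thesis by linarith
  qed
  have aC: "a^2/C^2 \<le> a/C"
  proof -
    have "a^2 \<le> a" using ab by (simp add: power2_eq_square mult_left_le_one_le)
    moreover have "a/C^2 \<le> a/C" using ab bd by (intro divide_left_mono) (auto simp: power2_eq_square)
    moreover have c2: "a^2/C^2 \<le> a/C^2" using \<open>a^2 \<le> a\<close> bd by (intro divide_right_mono) auto
    ultimately show ?thesis by linarith
  qed
  have hyp': "e \<le> mu * (-p''/p) + nu * (-r''/r)"
  proof -
    have "- mu * p''/p = mu * (-p''/p)" "- nu * r''/r = nu * (-r''/r)" by (rule neg_div)+
    moreover have "- (nu * r''/r) = - nu * r''/r" by simp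
    ultimately show ?thesis using hyp by linarith
  qed
  have "a^2*e/C^2 \<le> (a/C)*e" using mult_right_mono[OF aC, of e] e by simp
  also have "\<dots> \<le> (a/C)*(mu * (-p''/p) + nu * (-r''/r))" using hyp' ab bd by (intro mult_left_mono) auto
  also have "\<dots> = mu*((a/C)*(-p''/p)) + nu*((a/C)*(-r''/r))" by (simp add: algebra_simps)
  also have "\<dots> \<le> mu*T + nu*U" using A(1) B(1) mn by (intro add_mono mult_left_mono) auto
  finally have 1: "a^2*e/C^2 \<le> mu*T + nu*U" .
  have "b/(P*R^2) \<le> T" using A(2) .
  also have "T \<le> mu*T" using A(3) mn by (simp add: mult_le_cancel_right1)
  also have "mu*T \<le> mu*T + nu*U" using B(3) mn by simp
  finally have 2: "b/(P*R^2) \<le> mu*T + nu*U" .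
  show ?thesis using 1 2 eq by simp
qed

lemma final_eps:
  fixes a b e C P R :: real
  assumes "0\<le>a" "0\<le>b" "a+b=1" "0<e" "1\<le>C" "0<P" "0<R"
  shows "min (e/(4*C^2)) (1/(2*P*R^2)) \<le> max (a^2*e/C^2) (b/(P*R^2))"
proof (cases "a \<ge> 1/2")
  case True
  then have "1/4 \<le> a^2" using power_mono[OF True, of 2] by (simp add: power2_eq_square)
  then have "(1/4)*(e/C^2) \<le> a^2*(e/C^2)" using assms by (intro mult_right_mono) auto
  then show ?thesis by (simp add: field_simps)
next
  case False
  then have b: "1/2 \<le> b" using assms by simp
  have "1/(2*P*R^2) = (1/2)/(P*R^2)" by simp
  also have "\<dots> \<le> b/(P*R^2)" using b assms by (intro divide_right_mono) auto
  finally show ?thesis by simp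
qed

lemma comb_le:
  fixes a b x y M :: real
  assumes "0\<le>a" "0\<le>b" "a+b=1" "x \<le> M" "y \<le> M"
  shows "a*x+b*y \<le> M"
proof -
  have "a*x \<le> a*M" "b*y \<le> b*M" using assms by (auto intro: mult_left_mono)
  moreover have "a*M+b*M = M" using assms(3) by (metis distrib_right mult_1)
  ultimately show ?thesis by linarith
qed

lemma k_facts:
  assumes sm: "smooth_cl L D f" and L: "L>0" and d2: "\<forall>s\<in>{0<..<L}. D 2 s \<le> 0"
    and b: "D 1 0 = 0" "D 1 L = -1" "D 0 L = 0" and s: "s\<in>{0<..<L}"
  shows "-1 \<le> D 1 s" "D 1 s \<le> 0" "f s \<le> L - s" "f 0 * (L-s) \<le> f s * L"
proof -
  have fD: "f x = D 0 x" if "x\<in>{0..L}" for x using sm that unfolding smooth_cl_def by auto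
  have s0: "0<s" "s<L" using s by auto
  show "D 1 s \<le> 0" using smooth_anti[OF sm d2, of 0 s] s0 b by auto
  have m1: "-1 \<le> D 1 x" if "0\<le>x" "x\<le>L" for x using smooth_anti[OF sm d2, of x L] that b by auto
  then show "-1 \<le> D 1 s" using s0 by auto
  obtain z2 where z2: "z2\<in>{s<..<L}" "D 0 L - D 0 s = D (Suc 0) z2 * (L - s)"
    using smooth_mvt[OF sm _ s0(2), of 0] s0 by auto
  have "-1 * (L-s) \<le> D 1 z2 * (L-s)" using m1[of z2] z2 s0 by (intro mult_right_mono) auto
  then show "f s \<le> L - s" using z2 b fD[of s] s0 by simp
  obtain z1 where z1: "z1\<in>{0<..<s}" "D 0 s - D 0 0 = D (Suc 0) z1 * (s - 0)"
    using smooth_mvt[OF sm _ s0(1), of 0] s0 by auto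
  have "D 1 z2 \<le> D 1 z1" using smooth_anti[OF sm d2, of z1 z2] z1 z2 by auto
  then have "s*(L-s)*D 1 z2 \<le> s*(L-s)*D 1 z1" using s0 by (intro mult_left_mono) auto
  moreover have "s*(L-s)*D 1 z2 = s*(D 0 L - D 0 s)" using z2 by (simp add: mult.commute mult.left_commute)
  moreover have "s*(L-s)*D 1 z1 = (L-s)*(D 0 s - D 0 0)" using z1 by (simp add: mult.commute mult.left_commute)
  ultimately have "s*(D 0 L - D 0 s) \<le> (L-s)*(D 0 s - D 0 0)" by linarith
  then have "D 0 0 * (L-s) \<le> D 0 s * L" using b by (simp add: algebra_simps)
  then show "f 0 * (L-s) \<le> f s * L" using fD[of 0] fD[of s] s0 by simp
qed

lemma h_facts:
  assumes sm: "smooth_cl L D f" and L: "L>0" and d2: "\<forall>s\<in>{0<..<L}. D 2 s \<le> 0"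
    and b: "D 1 0 = 1" "D 1 L = 0" "D 0 0 = 0" and s: "s\<in>{0<..<L}"
  shows "D 1 s \<le> 1" "0 \<le> D 1 s" "f s \<le> s" "f L * s \<le> f s * L"
proof -
  have fD: "f x = D 0 x" if "x\<in>{0..L}" for x using sm that unfolding smooth_cl_def by auto
  have s0: "0<s" "s<L" using s by auto
  show "0 \<le> D 1 s" using smooth_anti[OF sm d2, of s L] s0 b by auto
  have m1: "D 1 x \<le> 1" if "0\<le>x" "x\<le>L" for x using smooth_anti[OF sm d2, of 0 x] that b by auto
  then show "D 1 s \<le> 1" using s0 by auto
  obtain z1 where z1: "z1\<in>{0<..<s}" "D 0 s - D 0 0 = D (Suc 0) z1 * (s - 0)"
    using smooth_mvt[OF sm _ s0(1), of 0] s0 by auto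
  have "D 1 z1 * s \<le> 1 * s" using m1[of z1] z1 s0 by (intro mult_right_mono) auto
  then show "f s \<le> s" using z1 b fD[of s] s0 by simp
  obtain z2 where z2: "z2\<in>{s<..<L}" "D 0 L - D 0 s = D (Suc 0) z2 * (L - s)"
    using smooth_mvt[OF sm _ s0(2), of 0] s0 by auto
  have "D 1 z2 \<le> D 1 z1" using smooth_anti[OF sm d2, of z1 z2] z1 z2 by auto
  then have "s*(L-s)*D 1 z2 \<le> s*(L-s)*D 1 z1" using s0 by (intro mult_left_mono) auto
  moreover have "s*(L-s)*D 1 z2 = s*(D 0 L - D 0 s)" using z2 by (simp add: mult.commute mult.left_commute)
  moreover have "s*(L-s)*D 1 z1 = (L-s)*(D 0 s - D 0 0)" using z1 by (simp add: mult.commute mult.left_commute)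
  ultimately have "s*(D 0 L - D 0 s) \<le> (L-s)*(D 0 s - D 0 0)" by linarith
  then have "D 0 L * s \<le> D 0 s * L" using b by (simp add: algebra_simps)
  then show "f L * s \<le> f s * L" using fD[of L] fD[of s] s0 by simp
qed

lemma trig_facts:
  fixes R s :: real
  assumes R: "R>0" and s: "0<s" "s<pi*R/2"
  shows "pi*R/2 - s \<le> pi/2*(R*cos(s/R))" "R*cos(s/R) \<le> pi*R/2 - s"
    "s \<le> pi/2*(R* sin(s/R))" "R* sin(s/R) \<le> s" "0 < cos(s/R)" "0 < sin(s/R)"
    "(sin(s/R))^2 \<le> 1" "(cos(s/R))^2 \<le> 1"
proof -
  have x: "0 < s/R" "s/R < pi/2" using R s by (auto simp: field_simps)
  define y where "y = (pi*R/2 - s)/R"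
  have y: "0 \<le> y" "y \<le> pi/2" "y = pi/2 - s/R" using R s x unfolding y_def by (auto simp: field_simps)
  have cy: "cos(s/R) = sin y" using y(3) by (simp add: cos_sin_eq)
  have "2/pi*y \<le> sin y" using jordan[OF y(1,2)] .
  then have "pi/2*(R*(2/pi*y)) \<le> pi/2*(R* sin y)" using R pi_gt_zero by (intro mult_left_mono) auto
  moreover have "pi/2*(R*(2/pi*y)) = pi*R/2 - s" using R unfolding y_def by (simp add: field_simps)
  ultimately show "pi*R/2 - s \<le> pi/2*(R*cos(s/R))" using cy by simp
  have "R * sin y \<le> R * y" using sin_x_le_x[OF y(1)] R by simp
  then show "R*cos(s/R) \<le> pi*R/2 - s" using cy R unfolding y_def by simp
  have "2/pi*(s/R) \<le> sin (s/R)" by (rule jordan) (use x in auto)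
  then have "pi/2*(R*(2/pi*(s/R))) \<le> pi/2*(R* sin(s/R))" using R pi_gt_zero by (intro mult_left_mono) auto
  then show "s \<le> pi/2*(R* sin(s/R))" using R by simp
  have "R * sin (s/R) \<le> R * (s/R)" using mult_left_mono[OF sin_x_le_x[of "s/R"], of R] x R by simp
  then show "R* sin(s/R) \<le> s" using R by simp
  show "0 < cos(s/R)" using x by (intro cos_gt_zero_pi) auto
  show "0 < sin(s/R)" by (rule sin_gt_zero) (use x pi_gt_zero in linarith)+
  show "(sin(s/R))^2 \<le> 1" "(cos(s/R))^2 \<le> 1" using sin_cos_squared_add[of "s/R"]
    by (smt (verit) zero_le_power2)+
qed

lemma DC_vals:
  assumes "R \<noteq> 0"
  shows "DC R 0 x = R*cos(x/R)" "DC R 1 x = - sin(x/R)" "DC R 2 x = -(R*cos(x/R))/R^2"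
    "DS R 0 x = R* sin(x/R)" "DS R 1 x = cos(x/R)" "DS R 2 x = -(R* sin(x/R))/R^2"
  using assms by (simp_all add: DC_def DS_def cos_add sin_add power2_eq_square)

lemma DC_bnd:
  assumes R: "R > 0"
  shows "DS R 1 0 = 1" "DS R (2*j) 0 = 0" "DC R (2*j+1) 0 = 0"
    "DC R 1 (pi*R/2) = -1" "DC R (2*j) (pi*R/2) = 0" "DS R (2*j+1) (pi*R/2) = 0"
proof -
  have e1: "real (2*j) * pi / 2 = real j * pi" by simp
  have e2: "real (2*j+1) * pi / 2 = real j * pi + pi/2" by (simp add: field_simps)
  have e3: "pi*R/2/R = pi/2" using R by simp
  show "DS R 1 0 = 1" using R by (simp add: DS_def)
  show "DS R (2*j) 0 = 0" unfolding DS_def e1 by simp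
  show "DC R (2*j+1) 0 = 0" unfolding DC_def e2 by (simp add: cos_add)
  show "DC R 1 (pi*R/2) = -1" using R unfolding DC_def e3 by simp
  show "DC R (2*j) (pi*R/2) = 0" unfolding DC_def e3 e1 by (simp add: cos_add)
  show "DS R (2*j+1) (pi*R/2) = 0" unfolding DS_def e3 e2 by (simp add: sin_add cos_add)
qed

lemma swap3: "nn*x*y/(k*h) = nn*y*x/(h*(k::real))"
  by (simp add: mult_ac)

theorem lemma3p11:
  fixes n m :: nat and R :: real and k1 h1 :: "real \<Rightarrow> real"
  assumes "n \<ge> 2" and "m \<ge> 2" and "R > 0"
    and "\<forall>s\<in>{0<..<pi*R/2}. deriv (deriv k1) s \<le> 0"
    and "\<forall>s\<in>{0<..<pi*R/2}. deriv (deriv h1) s \<le> 0"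
    and "dwp_pos_ricci (pi*R/2) m n k1 h1"
  shows "\<forall>l\<in>{1..2::real}. dwp_pos_ricci (pi*R/2) m n
           (\<lambda>s. (2 - l) * k1 s + (l - 1) * R * cos (s / R))
           (\<lambda>s. (2 - l) * h1 s + (l - 1) * R * sin (s / R))"
proof
  fix l :: real assume l: "l \<in> {1..2}"
  have ab: "0 \<le> 2-l" "0 \<le> l-1" "(2-l)+(l-1) = 1" using l by auto
  define L where "L = pi*R/2"
  have Lpos: "L > 0" using assms(3) unfolding L_def by simp
  have R0: "R \<noteq> 0" using assms(3) by simp
  from assms(6) obtain Dk Dh e where
    skk: "smooth_cl L Dk k1" and shh: "smooth_cl L Dh h1"
    and kpos: "\<forall>s\<in>{0..<L}. k1 s > 0" and hpos: "\<forall>s\<in>{0<..L}. h1 s > 0"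
    and b1: "Dh 1 0 = 1" and b2: "\<forall>j. Dh (2*j) 0 = 0 \<and> Dk (2*j+1) 0 = 0"
    and b3: "Dk 1 L = -1" and b4: "\<forall>j. Dk (2*j) L = 0 \<and> Dh (2*j+1) L = 0"
    and e: "e > 0"
    and ric: "\<forall>s\<in>{0<..<L}. ric_rad m n k1 h1 s \<ge> e \<and> ric_k m n k1 h1 s \<ge> e \<and> ric_h m n k1 h1 s \<ge> e"
    unfolding dwp_pos_ricci_def dwp_metric_def L_def by blast
  have Dk2: "\<forall>s\<in>{0<..<L}. Dk 2 s \<le> 0"
  proof
    fix s assume s: "s \<in> {0<..<L}"
    have "deriv (deriv k1) s = Dk 2 s" using smooth_deriv[OF skk s] by simp
    moreover have "deriv (deriv k1) s \<le> 0" using assms(4) s unfolding L_def by auto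
    ultimately show "Dk 2 s \<le> 0" by simp
  qed
  have Dh2: "\<forall>s\<in>{0<..<L}. Dh 2 s \<le> 0"
  proof
    fix s assume s: "s \<in> {0<..<L}"
    have "deriv (deriv h1) s = Dh 2 s" using smooth_deriv[OF shh s] by simp
    moreover have "deriv (deriv h1) s \<le> 0" using assms(5) s unfolding L_def by auto
    ultimately show "Dh 2 s \<le> 0" by simp
  qed
  have bk1: "Dk 1 0 = 0" using b2 by (metis mult_0_right add_0 One_nat_def)
  have bk0: "Dk 0 L = 0" using b4 by (metis mult_0_right)
  have bh1: "Dh 1 L = 0" using b4 by (metis mult_0_right add_0 One_nat_def)
  have bh0: "Dh 0 0 = 0" using b2 by (metis mult_0_right)
  have k0: "k1 0 > 0" using kpos Lpos by auto
  have hL: "h1 L > 0" using hpos Lpos by auto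
  define C where "C = max 1 (max (L / k1 0) (L / h1 L))"
  define P where "P = pi/2"
  have C1: "1 \<le> C" unfolding C_def by simp
  have Ck: "L / k1 0 \<le> C" and Ch: "L / h1 L \<le> C" unfolding C_def by auto
  have P1: "1 \<le> P" unfolding P_def using pi_ge_two by simp
  have Ppos: "0 < P" using P1 by simp
  define K where "K = (\<lambda>s. (2 - l) * k1 s + (l - 1) * R * cos (s / R))"
  define H where "H = (\<lambda>s. (2 - l) * h1 s + (l - 1) * R * sin (s / R))"
  define DK where "DK = (\<lambda>j x. (2-l) * Dk j x + (l-1) * DC R j x)"
  define DH where "DH = (\<lambda>j x. (2-l) * Dh j x + (l-1) * DS R j x)"
  have sK: "smooth_cl L DK K" unfolding DK_def
    by (rule smooth_comb[where E="DC R", OF skk DC_deriv]) (auto simp: K_def DC_def mult.assoc)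
  have sH: "smooth_cl L DH H" unfolding DH_def
    by (rule smooth_comb[where E="DS R", OF shh DS_deriv]) (auto simp: H_def DS_def mult.assoc)
  note cb = DC_bnd[OF assms(3), folded L_def]
  have Kp: "\<forall>s\<in>{0..<L}. K s > 0"
  proof
    fix s assume s: "s \<in> {0..<L}"
    have "0 < cos (s/R)"
    proof (rule cos_gt_zero_pi)
      have "0 \<le> s/R" using s assms(3) by simp
      then show "- (pi/2) < s/R" using pi_gt_zero by linarith
      have "s < pi*R/2" using s unfolding L_def by simp
      then show "s/R < pi/2" using assms(3) by (simp add: divide_less_eq mult.commute)
    qed
    then have "0 < (2-l)*k1 s + (l-1)*(R*cos (s/R))"
      using ab kpos s assms(3) by (intro pos_comb) auto
    then show "K s > 0" unfolding K_def by (simp add: mult.assoc)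
  qed
  have Hp: "\<forall>s\<in>{0<..L}. H s > 0"
  proof
    fix s assume s: "s \<in> {0<..L}"
    have "0 < sin (s/R)"
    proof (rule sin_gt_zero)
      show "0 < s/R" using s assms(3) by simp
      have "s \<le> pi*R/2" using s unfolding L_def by simp
      then have "s/R \<le> pi/2" using assms(3) by (simp add: divide_le_eq mult.commute)
      then show "s/R < pi" using pi_gt_zero by linarith
    qed
    then have "0 < (2-l)*h1 s + (l-1)*(R* sin (s/R))"
      using ab hpos s assms(3) by (intro pos_comb) auto
    then show "H s > 0" unfolding H_def by (simp add: mult.assoc)
  qed
  have v1: "DH 1 0 = 1" unfolding DH_def using b1 cb by simp
  have v2: "DK 1 L = -1" unfolding DK_def using b3 cb by simp
  have v3: "\<forall>j. DH (2*j) 0 = 0 \<and> DK (2*j+1) 0 = 0" unfolding DH_def DK_def using b2 cb by simp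
  have v4: "\<forall>j. DK (2*j) L = 0 \<and> DH (2*j+1) L = 0" unfolding DH_def DK_def using b4 cb by simp
  have metric: "dwp_metric L K H"
    unfolding dwp_metric_def using Lpos sK sH Kp Hp v1 v2 v3 v4 by blast
  define eps where "eps = min (e/(4*C^2)) (1/(2*P*R^2))"
  have epos: "eps > 0" unfolding eps_def using e C1 Ppos assms(3) by auto
  have main: "ric_rad m n K H s \<ge> eps \<and> ric_k m n K H s \<ge> eps \<and> ric_h m n K H s \<ge> eps"
    if s: "s \<in> {0<..<L}" for s
  proof -
    have s': "0 < s" "s < pi*R/2" using s unfolding L_def by auto
    note kf = k_facts[OF skk Lpos Dk2 bk1 b3 bk0 s]
    note hf = h_facts[OF shh Lpos Dh2 b1 bh1 bh0 s]
    note tf = trig_facts[OF assms(3) s', folded L_def P_def]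
    note dv = DC_vals[OF R0, of s]
    define c where "c = R*cos(s/R)"
    define d where "d = R * sin(s/R)"
    define k where "k = k1 s"
    define h where "h = h1 s"
    have kp: "k > 0" using kpos s unfolding k_def by auto
    have hp: "h > 0" using hpos s unfolding h_def by auto
    have cp: "c > 0" unfolding c_def using tf assms(3) by simp
    have dp: "d > 0" unfolding d_def using tf assms(3) by simp
    have k_Pc: "k \<le> P*c" using kf(3) tf(1) unfolding k_def c_def by linarith
    have c_Ck: "c \<le> C*k"
    proof -
      have "L - s \<le> (L / k1 0) * k" using kf(4) k0 unfolding k_def by (simp add: field_simps)
      also have "\<dots> \<le> C*k" using Ck kp by (intro mult_right_mono) auto
      finally show ?thesis using tf(2) unfolding c_def by linarith
    qed
    have k_Ck: "k \<le> C*k" using C1 kp by simp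
    have c_Pc: "c \<le> P*c" using P1 cp by simp
    have h_Pd: "h \<le> P*d" using hf(3) tf(3) unfolding h_def d_def by linarith
    have d_Ch: "d \<le> C*h"
    proof -
      have "s \<le> (L / h1 L) * h" using hf(4) hL unfolding h_def by (simp add: field_simps)
      also have "\<dots> \<le> C*h" using Ch hp by (intro mult_right_mono) auto
      finally show ?thesis using tf(4) unfolding d_def by linarith
    qed
    have h_Ch: "h \<le> C*h" using C1 hp by simp
    have d_Pd: "d \<le> P*d" using P1 dp by simp
    have bK1: "(2-l)*k + (l-1)*c \<le> C*k" using ab k_Ck c_Ck by (rule comb_le)
    have bK2: "(2-l)*k + (l-1)*c \<le> P*c" using ab k_Pc c_Pc by (rule comb_le)
    have bH1: "(2-l)*h + (l-1)*d \<le> C*h" using ab h_Ch d_Ch by (rule comb_le)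
    have bH2: "(2-l)*h + (l-1)*d \<le> P*d" using ab h_Pd d_Pd by (rule comb_le)
    have dk: "deriv k1 s = Dk 1 s" "deriv (deriv k1) s = Dk 2 s" using smooth_deriv[OF skk s] by auto
    have dh: "deriv h1 s = Dh 1 s" "deriv (deriv h1) s = Dh 2 s" using smooth_deriv[OF shh s] by auto
    have dK: "deriv K s = (2-l)*Dk 1 s + (l-1)*(- sin(s/R))"
        "deriv (deriv K) s = (2-l)*Dk 2 s + (l-1)*(-c/R^2)"
      using smooth_deriv[OF sK s] dv unfolding DK_def c_def by auto
    have dH: "deriv H s = (2-l)*Dh 1 s + (l-1)*cos(s/R)"
        "deriv (deriv H) s = (2-l)*Dh 2 s + (l-1)*(-d/R^2)"
      using smooth_deriv[OF sH s] dv unfolding DH_def d_def by auto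
    have Ks: "K s = (2-l)*k + (l-1)*c" unfolding K_def k_def c_def by (simp add: mult.assoc)
    have Hs: "H s = (2-l)*h + (l-1)*d" unfolding H_def h_def d_def by (simp add: mult.assoc)
    have ric1: "e \<le> ric_rad m n k1 h1 s" "e \<le> ric_k m n k1 h1 s" "e \<le> ric_h m n k1 h1 s"
      using ric s by auto
    have mn: "1 \<le> real m - 1" "1 \<le> real n - 1" "0 \<le> real m - 2" "0 \<le> real n - 2" "0 \<le> real m - 1" "0 \<le> real n - 1"
      using assms(1,2) by auto
    have sg: "Dk 1 s * Dh 1 s \<le> 0" "(- sin(s/R)) * Dh 1 s \<le> 0" "Dk 1 s * cos(s/R) \<le> 0"
      "(- sin(s/R)) * cos(s/R) \<le> 0"
      using kf hf tf by (auto intro: mult_nonpos_nonneg)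
    have sg2: "Dh 1 s * Dk 1 s \<le> 0" "cos(s/R) * Dk 1 s \<le> 0" "Dh 1 s * (- sin(s/R)) \<le> 0"
      "cos(s/R) * (- sin(s/R)) \<le> 0"
      using sg by (simp_all add: mult.commute)
    have sq: "(Dk 1 s)^2 \<le> 1" "(Dh 1 s)^2 \<le> 1" "(- sin(s/R))^2 \<le> 1" "(cos(s/R))^2 \<le> 1"
      using kf hf tf by (simp_all add: abs_square_le_1)
    have fe: "eps \<le> max ((2-l)^2*e/C^2) ((l-1)/(P*R^2))"
      unfolding eps_def using ab e C1 Ppos assms(3) by (rule final_eps)
    have hr: "e \<le> - (real m - 1) * Dk 2 s / k - (real n - 1) * Dh 2 s / h"
      using ric1(1) unfolding ric_rad_def dk dh k_def h_def .
    have r1: "max ((2-l)^2*e/C^2) ((l-1)/(P*R^2)) \<le> ric_rad m n K H s"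
      unfolding ric_rad_def dK dH Ks Hs
      using core_rad[OF ab kp cp hp dp bK1 bK2 bH1 bH2 C1 Ppos assms(3) Dk2[rule_format, OF s]
        Dh2[rule_format, OF s] mn(1,2) e hr] .
    have hk: "e \<le> - Dk 2 s / k + (real m - 2) * (1 - (Dk 1 s)^2) / k^2
        - (real n - 1) * Dk 1 s * Dh 1 s / (k * h)"
      using ric1(2) unfolding ric_k_def dk dh k_def h_def .
    have r2: "max ((2-l)^2*e/C^2) ((l-1)/(P*R^2)) \<le> ric_k m n K H s"
      unfolding ric_k_def dK dH Ks Hs
      using core_T[OF ab kp cp hp dp bK1 bK2 bH1 C1 Ppos assms(3) Dk2[rule_format, OF s]
        sq(1) sq(3) sg mn(3) mn(6) e hk] .
    have hh: "e \<le> - Dh 2 s / h + (real n - 2) * (1 - (Dh 1 s)^2) / h^2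
        - (real m - 1) * Dh 1 s * Dk 1 s / (h * k)"
      using ric1(3) unfolding ric_h_def dk dh k_def h_def swap3 .
    have r3: "max ((2-l)^2*e/C^2) ((l-1)/(P*R^2)) \<le> ric_h m n K H s"
      unfolding ric_h_def dK dH Ks Hs swap3
      using core_T[OF ab hp dp kp cp bH1 bH2 bK1 C1 Ppos assms(3) Dh2[rule_format, OF s]
        sq(2) sq(4) sg2 mn(4) mn(5) e hh] .
    show ?thesis using fe r1 r2 r3 by linarith
  qed
  have "dwp_pos_ricci L m n K H"
    unfolding dwp_pos_ricci_def using metric epos main by blast
  then show "dwp_pos_ricci (pi*R/2) m n
           (\<lambda>s. (2 - l) * k1 s + (l - 1) * R * cos (s / R))
           (\<lambda>s. (2 - l) * h1 s + (l - 1) * R * sin (s / R))"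
    unfolding L_def K_def H_def .
qed

end
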